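(* Let $\Gamma=(U\cup V,E)$ be a $3$-regular bipartite graph with bipartition $U,V$, and let $M$ be the $n\times n$ matrix described in the context. If $\Gamma$ has an odd number of perfect matchings, then $\det(M)\neq 0$.
   Context: Construction of $\hat\Gamma$: for each vertex $v$ of $\Gamma$ with neighbours $x,y,z$, there are four inner vertices $a_{v,S}$, one for each subset $S\subseteq\{x,y,z\}$ of even size (the set $I_v$), and six outer vertices $b_{v,u,0},b_{v,u,1}$ for $u\in\{x,y,z\}$ (the set $O_v$). Within the gadget, $a_{v,S}$ is adjacent to $b_{v,u,1}$ if $u\in S$ and to $b_{v,u,0}$ if $u\notin S$. For each edge $e=\{u,v\}\in E$ and $i\in\{0,1\}$ there is an edge $e_i$ joining $b_{v,u,i}$ and $b_{u,v,i}$. No other edges. Let $X=\bigcup_{v\in U}I_v\cup\bigcup_{v\in V}O_v$ and $Y=\bigcup_{v\in V}I_v\cup\bigcup_{v\in U}O_v$; all edges of $\hat\Gamma$ join $X$ to $Y$ and $|X|=|Y|=n=10|U|$. Fix arbitrary bijections $\eta:X\to[n]$ and $\eta':Y\to[n]$, and let $M$ be the $n\times n$ $\{0,1\}$-matrix (over a field of characteristic $0$, e.g. the rationals) with $M(\eta(x),\eta'(y))=1$ iff $x$ and $y$ are adjacent in $\hat\Gamma$, and $0$ otherwise. *)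

theory Defs
  imports Main "Jordan_Normal_Form.Determinant"
begin

text \<open>Vertices of the graph Gamma-hat. Inner v S is a_{v,S};
  Outer v u i is b_{v,u,i}, where the index i in {0,1} is encoded as a bool
  (False = 0, True = 1).\<close>
datatype 'a hatv = Inner 'a "'a set" | Outer 'a 'a bool

definition nbr :: "('a \<times> 'a) set \<Rightarrow> 'a \<Rightarrow> 'a set" where
  "nbr E v = {w. (v, w) \<in> E \<or> (w, v) \<in> E}"

definition bipartite_cubic :: "'a set \<Rightarrow> 'a set \<Rightarrow> ('a \<times> 'a) set \<Rightarrow> bool" where
  "bipartite_cubic U V E \<longleftrightarrow> finite U \<and> finite V \<and> U \<inter> V = {} \<and> E \<subseteq> U \<times> V \<and>
     (\<forall>v \<in> U \<union> V. card (nbr E v) = 3)"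

definition perfect_matching :: "'a set \<Rightarrow> 'a set \<Rightarrow> ('a \<times> 'a) set \<Rightarrow> ('a \<times> 'a) set \<Rightarrow> bool" where
  "perfect_matching U V E F \<longleftrightarrow> F \<subseteq> E \<and>
     (\<forall>u \<in> U. \<exists>!v. (u, v) \<in> F) \<and> (\<forall>v \<in> V. \<exists>!u. (u, v) \<in> F)"

definition inner_set :: "('a \<times> 'a) set \<Rightarrow> 'a \<Rightarrow> 'a hatv set" where
  "inner_set E v = {Inner v S | S. S \<subseteq> nbr E v \<and> even (card S)}"

definition outer_set :: "('a \<times> 'a) set \<Rightarrow> 'a \<Rightarrow> 'a hatv set" where
  "outer_set E v = {Outer v u i | u i. u \<in> nbr E v}"

definition Xset :: "'a set \<Rightarrow> 'a set \<Rightarrow> ('a \<times> 'a) set \<Rightarrow> 'a hatv set" where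
  "Xset U V E = (\<Union>v\<in>U. inner_set E v) \<union> (\<Union>v\<in>V. outer_set E v)"

definition Yset :: "'a set \<Rightarrow> 'a set \<Rightarrow> ('a \<times> 'a) set \<Rightarrow> 'a hatv set" where
  "Yset U V E = (\<Union>v\<in>V. inner_set E v) \<union> (\<Union>v\<in>U. outer_set E v)"

fun gadget_adj :: "('a \<times> 'a) set \<Rightarrow> 'a hatv \<Rightarrow> 'a hatv \<Rightarrow> bool" where
  "gadget_adj E (Inner v S) (Outer w u i) \<longleftrightarrow> v = w \<and> u \<in> nbr E v \<and> (i \<longleftrightarrow> u \<in> S)"
| "gadget_adj E _ _ \<longleftrightarrow> False"

fun link_adj :: "('a \<times> 'a) set \<Rightarrow> 'a hatv \<Rightarrow> 'a hatv \<Rightarrow> bool" where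
  "link_adj E (Outer v u i) (Outer u' v' j) \<longleftrightarrow> u' = u \<and> v' = v \<and> i = j \<and> u \<in> nbr E v"
| "link_adj E _ _ \<longleftrightarrow> False"

definition hat_adj :: "('a \<times> 'a) set \<Rightarrow> 'a hatv \<Rightarrow> 'a hatv \<Rightarrow> bool" where
  "hat_adj E x y \<longleftrightarrow> gadget_adj E x y \<or> gadget_adj E y x \<or> link_adj E x y"

end

theory Submission
  imports Defs
begin


lemma sum_sign_odd:
  assumes "finite G" "odd (card G)"
  shows "(\<Sum>p\<in>G. sign p) \<noteq> (0::int)"
proof -
  have "even ((\<Sum>p\<in>G. sign p) - int (card G))"
  proof -
    have "(\<Sum>p\<in>G. sign p) - int (card G) = (\<Sum>p\<in>G. sign p - 1)"
      by (simp add: sum_subtractf)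
    moreover have "even (\<Sum>p\<in>G. sign p - 1)"
      by (rule dvd_sum) (auto simp: sign_def)
    ultimately show ?thesis by simp
  qed
  then show ?thesis using assms(2) by auto
qed

lemma prod_indicator_bool:
  "finite A \<Longrightarrow> (\<Prod>i\<in>A. (if P i then 1 else 0::'k::comm_semiring_1)) = (if \<forall>i\<in>A. P i then 1 else 0)"
proof (cases "\<forall>i\<in>A. P i")
  case True then show ?thesis by simp
next
  case False
  then obtain i where "i \<in> A" "\<not> P i" by auto
  assume "finite A"
  then show ?thesis using \<open>i \<in> A\<close> \<open>\<not> P i\<close> False by (auto intro!: prod_zero)
qed

lemma graph_nonsing:
  fixes \<alpha> :: "'a \<Rightarrow> 'k::field_char_0"
  assumes bc: "bipartite_cubic U V E"
    and odd: "odd (card {F. perfect_matching U V E F})"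
    and eqs: "\<forall>u\<in>U. (\<Sum>w\<in>nbr E u. \<alpha> w) = 0"
    and v: "v \<in> V"
  shows "\<alpha> v = 0"
proof -
  have fU: "finite U" and fV: "finite V" and disj: "U \<inter> V = {}" and EUV: "E \<subseteq> U \<times> V"
    using bc unfolding bipartite_cubic_def by auto
  let ?PM = "{F. perfect_matching U V E F}"
  have "?PM \<noteq> {}" using odd by (metis card.empty odd_card_imp_not_empty)
  then obtain F0 where F0: "perfect_matching U V E F0" by auto
  define h where "h u = (THE v. (u, v) \<in> F0)" for u
  have hF: "(u, h u) \<in> F0" if "u \<in> U" for u
    using F0 that unfolding perfect_matching_def h_def by (metis theI')
  have F0E: "F0 \<subseteq> E" using F0 unfolding perfect_matching_def by auto
  have hV: "h u \<in> V" if "u \<in> U" for u using hF[OF that] F0E EUV by auto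
  have bijh: "bij_betw h U V"
  proof (rule bij_betw_imageI)
    show "inj_on h U"
    proof (rule inj_onI)
      fix x y assume "x \<in> U" "y \<in> U" "h x = h y"
      then show "x = y" using hF[of x] hF[of y] hV[of x] F0 unfolding perfect_matching_def by metis
    qed
    show "h ` U = V"
    proof
      show "h ` U \<subseteq> V" using hV by auto
      show "V \<subseteq> h ` U"
      proof
        fix w assume "w \<in> V"
        then obtain u where u: "(u, w) \<in> F0" using F0 unfolding perfect_matching_def by auto
        then have "u \<in> U" using F0E EUV by auto
        then have "h u = w" using hF[of u] u F0 unfolding perfect_matching_def by auto
        then show "w \<in> h ` U" using \<open>u \<in> U\<close> by auto
      qed
    qed
  qed
  define m where "m = card U"
  obtain f where f: "bij_betw f {0..<m} U" using ex_bij_betw_nat_finite[OF fU] m_def by auto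
  define g where "g = h \<circ> f"
  have g: "bij_betw g {0..<m} V" unfolding g_def using f bijh bij_betw_trans by blast
  define B :: "'k mat" where "B = mat m m (\<lambda>(i,j). if (f i, g j) \<in> E then 1 else 0)"
  have Bc: "B \<in> carrier_mat m m" unfolding B_def by auto
  define G where "G = {p. p permutes {0..<m} \<and> (\<forall>i\<in>{0..<m}. (f i, g (p i)) \<in> E)}"
  have finG: "finite G" unfolding G_def
    by (rule finite_subset[of _ "{p. p permutes {0..<m}}"]) (auto simp: finite_permutations)
  have detB: "det B = of_int (\<Sum>p\<in>G. sign p)"
  proof -
    have "det B = (\<Sum>p\<in>{p. p permutes {0..<m}}. signof p * (\<Prod>i=0..<m. B $$ (i, p i)))"
      using det_def'[OF Bc] .
    also have "\<dots> = (\<Sum>p\<in>{p. p permutes {0..<m}}. (if (\<forall>i\<in>{0..<m}. (f i, g (p i)) \<in> E) then signof p else 0))"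
    proof (rule sum.cong[OF refl])
      fix p assume p: "p \<in> {p. p permutes {0..<m}}"
      have "(\<Prod>i=0..<m. B $$ (i, p i)) = (\<Prod>i=0..<m. (if (f i, g (p i)) \<in> E then 1 else 0))"
        using p by (intro prod.cong[OF refl]) (auto simp: B_def permutes_in_image)
      also have "\<dots> = (if (\<forall>i\<in>{0..<m}. (f i, g (p i)) \<in> E) then 1 else 0)"
        by (rule prod_indicator_bool) simp
      finally show "signof p * (\<Prod>i=0..<m. B $$ (i, p i)) = (if (\<forall>i\<in>{0..<m}. (f i, g (p i)) \<in> E) then signof p else 0)"
        by simp
    qed
    also have "\<dots> = (\<Sum>p\<in>G. signof p)"
      unfolding G_def by (simp add: sum.inter_filter[symmetric] finite_permutations)
    also have "\<dots> = of_int (\<Sum>p\<in>G. sign p)" by simp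
    finally show ?thesis .
  qed
  have cardG: "card G = card ?PM"
  proof (rule bij_betw_same_card)
    define \<phi> where "\<phi> p = (\<lambda>i. (f i, g (p i))) ` {0..<m}" for p :: "nat \<Rightarrow> nat"
    have finj: "inj_on f {0..<m}" and ginj: "inj_on g {0..<m}" using f g unfolding bij_betw_def by auto
    have fim: "f ` {0..<m} = U" and gim: "g ` {0..<m} = V" using f g unfolding bij_betw_def by auto
    show "bij_betw \<phi> G ?PM"
    proof (rule bij_betw_imageI)
      show "inj_on \<phi> G"
      proof (rule inj_onI)
        fix p q assume p: "p \<in> G" and q: "q \<in> G" and e: "\<phi> p = \<phi> q"
        have pp: "p permutes {0..<m}" and qp: "q permutes {0..<m}" using p q unfolding G_def by auto
        show "p = q"
        proof
          fix i show "p i = q i"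
          proof (cases "i < m")
            case True
            then have "(f i, g (p i)) \<in> \<phi> p" unfolding \<phi>_def by auto
            then have "(f i, g (p i)) \<in> \<phi> q" using e by simp
            then obtain j where j: "j < m" "f i = f j" "g (p i) = g (q j)" unfolding \<phi>_def by auto
            then have "j = i" using finj True by (auto dest: inj_onD)
            moreover have "p i < m" "q j < m" using pp qp True j by (auto dest: permutes_in_image)
            ultimately show ?thesis using j ginj by (auto dest: inj_onD)
          next
            case False
            then show ?thesis using pp qp by (simp add: permutes_def)
          qed
        qed
      qed
      show "\<phi> ` G = ?PM"
      proof
        show "\<phi> ` G \<subseteq> ?PM"
        proof
          fix F assume "F \<in> \<phi> ` G"
          then obtain p where p: "p \<in> G" and F: "F = \<phi> p" by auto
          have pp: "p permutes {0..<m}" and pE: "\<forall>i\<in>{0..<m}. (f i, g (p i)) \<in> E" using p unfolding G_def by auto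
          have "F \<subseteq> E" using pE unfolding F \<phi>_def by auto
          moreover have "\<forall>u\<in>U. \<exists>!v. (u, v) \<in> F"
          proof
            fix u assume "u \<in> U"
            then obtain i where i: "i < m" "u = f i" using fim by force
            show "\<exists>!v. (u, v) \<in> F"
            proof (rule ex1I[of _ "g (p i)"])
              show "(u, g (p i)) \<in> F" using i unfolding F \<phi>_def by auto
              fix v assume "(u, v) \<in> F"
              then obtain j where "j < m" "f j = u" "v = g (p j)" unfolding F \<phi>_def by auto
              then show "v = g (p i)" using i finj by (auto dest: inj_onD)
            qed
          qed
          moreover have "\<forall>v\<in>V. \<exists>!u. (u, v) \<in> F"
          proof
            fix v assume "v \<in> V"
            then obtain k where k: "k < m" "v = g k" using gim by force
            have "k \<in> p ` {0..<m}" using pp k permutes_image by fastforce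
            then obtain i where i: "i < m" "p i = k" by auto
            show "\<exists>!u. (u, v) \<in> F"
            proof (rule ex1I[of _ "f i"])
              show "(f i, v) \<in> F" using i k unfolding F \<phi>_def by auto
              fix u assume "(u, v) \<in> F"
              then obtain j where j: "j < m" "f j = u" "v = g (p j)" unfolding F \<phi>_def by auto
              then have "p j < m" using pp by (auto dest: permutes_in_image)
              then have "p j = p i" using j i k ginj by (auto dest: inj_onD)
              then have "j = i" using pp by (metis permutes_inj injD)
              then show "u = f i" using j by simp
            qed
          qed
          ultimately show "F \<in> ?PM" unfolding perfect_matching_def by auto
        qed
        show "?PM \<subseteq> \<phi> ` G"
        proof
          fix F assume "F \<in> ?PM"
          then have PF: "perfect_matching U V E F" by simp
          have FE: "F \<subseteq> E" using PF unfolding perfect_matching_def by auto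
          define k where "k u = (THE v. (u, v) \<in> F)" for u
          have kF: "(u, k u) \<in> F" if "u \<in> U" for u
            using PF that unfolding perfect_matching_def k_def by (metis theI')
          have kV: "k u \<in> V" if "u \<in> U" for u using kF[OF that] FE EUV by auto
          have kuniq: "v = k u" if "u \<in> U" "(u, v) \<in> F" for u v
            using PF that kF unfolding perfect_matching_def by metis
          define p where "p i = (if i < m then the_inv_into {0..<m} g (k (f i)) else i)" for i
          have fiU: "f i \<in> U" if "i < m" for i using fim that by auto
          have gp: "g (p i) = k (f i)" and pm: "p i < m" if "i < m" for i
          proof -
            have "k (f i) \<in> g ` {0..<m}" using gim kV fiU that by auto
            then show "g (p i) = k (f i)" "p i < m" unfolding p_def using that ginj
              by (auto simp: f_the_inv_into_f the_inv_into_f_f)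
          qed
          have pinj: "inj_on p {0..<m}"
          proof (rule inj_onI)
            fix i j assume ij: "i \<in> {0..<m}" "j \<in> {0..<m}" "p i = p j"
            then have "k (f i) = k (f j)" using gp by (metis atLeastLessThan_iff)
            then have "(f i, k (f i)) \<in> F" "(f j, k (f i)) \<in> F" using kF fiU ij by (auto, metis)
            moreover have "k (f i) \<in> V" using kV fiU ij by auto
            ultimately have "f i = f j" using PF unfolding perfect_matching_def by metis
            then show "i = j" using finj ij by (auto dest: inj_onD)
          qed
          have pperm: "p permutes {0..<m}"
          proof (rule bij_imp_permutes)
            have "p ` {0..<m} = {0..<m}" by (rule endo_inj_surj) (use pm pinj in auto)
            then show "bij_betw p {0..<m} {0..<m}" using pinj unfolding bij_betw_def by auto
            show "\<And>x. x \<notin> {0..<m} \<Longrightarrow> p x = x" unfolding p_def by auto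
          qed
          have "p \<in> G" unfolding G_def using pperm gp kF fiU FE by auto
          moreover have "F = \<phi> p"
          proof
            show "\<phi> p \<subseteq> F" unfolding \<phi>_def using gp kF fiU by auto
            show "F \<subseteq> \<phi> p"
            proof
              fix x assume x: "x \<in> F"
              then obtain u v where uv: "x = (u, v)" "u \<in> U" using FE EUV by auto
              then obtain i where i: "i < m" "u = f i" using fim by force
              have "v = k u" using kuniq uv x by auto
              then show "x \<in> \<phi> p" unfolding \<phi>_def using uv i gp by force
            qed
          qed
          ultimately show "F \<in> \<phi> ` G" by auto
        qed
      qed
    qed
  qed
  have "(\<Sum>p\<in>G. sign p) \<noteq> 0" using sum_sign_odd[OF finG] odd cardG by simp
  then have "det B \<noteq> 0" unfolding detB by (metis of_int_eq_0_iff)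
  define a where "a = vec m (\<lambda>j. \<alpha> (g j))"
  have "B *\<^sub>v a = 0\<^sub>v m"
  proof (rule eq_vecI)
    fix i assume i: "i < dim_vec (0\<^sub>v m :: 'k vec)"
    then have im: "i < m" by simp
    have fi: "f i \<in> U" using f im by (auto dest: bij_betwE)
    have nb: "nbr E (f i) = {w \<in> V. (f i, w) \<in> E}"
      using fi EUV disj unfolding nbr_def by auto
    have "(B *\<^sub>v a) $ i = (\<Sum>j=0..<m. (if (f i, g j) \<in> E then 1 else 0) * \<alpha> (g j))"
      using im unfolding B_def a_def by (simp add: scalar_prod_def)
    also have "\<dots> = (\<Sum>j\<in>{j\<in>{0..<m}. (f i, g j) \<in> E}. \<alpha> (g j))"
      by (subst sum.inter_filter) (auto intro!: sum.cong)
    also have "\<dots> = (\<Sum>w\<in>{w \<in> V. (f i, w) \<in> E}. \<alpha> w)"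
    proof (rule sum.reindex_bij_betw)
      show "bij_betw g {j\<in>{0..<m}. (f i, g j) \<in> E} {w \<in> V. (f i, w) \<in> E}"
        using g unfolding bij_betw_def inj_on_def by auto
    qed
    also have "\<dots> = 0" using eqs fi nb by auto
    finally show "(B *\<^sub>v a) $ i = 0\<^sub>v m $ i" using im by simp
  qed (auto simp: B_def)
  then have "a = 0\<^sub>v m" using det_0_iff_vec_prod_zero[OF Bc] \<open>det B \<noteq> 0\<close> unfolding a_def by (metis vec_carrier)
  moreover obtain j where "j < m" "g j = v" using g v unfolding bij_betw_def by force
  ultimately show ?thesis unfolding a_def by (metis index_vec index_zero_vec(1))
qed



lemma memY: "Inner w T \<in> Yset U V E \<longleftrightarrow> w \<in> V \<and> T \<subseteq> nbr E w \<and> even (card T)"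
  "Outer w u i \<in> Yset U V E \<longleftrightarrow> w \<in> U \<and> u \<in> nbr E w"
  unfolding Yset_def inner_set_def outer_set_def by auto

lemma memX: "Inner w T \<in> Xset U V E \<longleftrightarrow> w \<in> U \<and> T \<subseteq> nbr E w \<and> even (card T)"
  "Outer w u i \<in> Xset U V E \<longleftrightarrow> w \<in> V \<and> u \<in> nbr E w"
  unfolding Xset_def inner_set_def outer_set_def by auto

lemma adj_Inner: "hat_adj E (Inner u S) y \<longleftrightarrow> (\<exists>w i. y = Outer u w i \<and> w \<in> nbr E u \<and> (i \<longleftrightarrow> w \<in> S))"
  unfolding hat_adj_def by (cases y) auto

lemma adj_Outer: "hat_adj E (Outer v u i) y \<longleftrightarrow>
   (y = Outer u v i \<and> u \<in> nbr E v) \<or> (\<exists>T. y = Inner v T \<and> u \<in> nbr E v \<and> (i \<longleftrightarrow> u \<in> T))"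
  unfolding hat_adj_def by (cases y) auto

lemma nbr_sym: "w \<in> nbr E u \<longleftrightarrow> u \<in> nbr E w"
  unfolding nbr_def by auto


lemma even_subsets3:
  assumes d: "x \<noteq> y" "y \<noteq> z" "x \<noteq> z"
  shows "{S. S \<subseteq> {x,y,z} \<and> even (card S)} = {{}, {x,y}, {x,z}, {y,z}}"
proof
  show "{{}, {x,y}, {x,z}, {y,z}} \<subseteq> {S. S \<subseteq> {x,y,z} \<and> even (card S)}" using d by auto
  show "{S. S \<subseteq> {x,y,z} \<and> even (card S)} \<subseteq> {{}, {x,y}, {x,z}, {y,z}}"
  proof
    fix S assume S: "S \<in> {S. S \<subseteq> {x,y,z} \<and> even (card S)}"
    then have e: "S = ({x} \<inter> S) \<union> ({y} \<inter> S) \<union> ({z} \<inter> S)" by blast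
    have ev: "even (card S)" using S by auto
    show "S \<in> {{}, {x,y}, {x,z}, {y,z}}"
    proof (cases "x \<in> S"; cases "y \<in> S"; cases "z \<in> S")
      assume "x \<in> S" "y \<in> S" "z \<in> S"
      then have "S = {x,y,z}" using e by auto
      then show ?thesis using ev d by simp
    next
      assume "x \<in> S" "y \<in> S" "z \<notin> S"
      then have "S = {x,y}" using e by auto
      then show ?thesis by simp
    next
      assume "x \<in> S" "y \<notin> S" "z \<in> S"
      then have "S = {x,z}" using e by auto
      then show ?thesis by simp
    next
      assume "x \<in> S" "y \<notin> S" "z \<notin> S"
      then have "S = {x}" using e by auto
      then show ?thesis using ev by simp
    next
      assume "x \<notin> S" "y \<in> S" "z \<in> S"
      then have "S = {y,z}" using e by auto
      then show ?thesis by simp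
    next
      assume "x \<notin> S" "y \<in> S" "z \<notin> S"
      then have "S = {y}" using e by auto
      then show ?thesis using ev by simp
    next
      assume "x \<notin> S" "y \<notin> S" "z \<in> S"
      then have "S = {z}" using e by auto
      then show ?thesis using ev by simp
    next
      assume "x \<notin> S" "y \<notin> S" "z \<notin> S"
      then have "S = {}" using e by auto
      then show ?thesis by simp
    qed
  qed
qed

lemma lin4:
  fixes a0 a1 b0 b1 c0 c1 :: "'k::field_char_0"
  assumes e0: "a0 + b0 + c0 = 0" and e1: "a1 + b1 + c0 = 0" and e2: "a1 + b0 + c1 = 0" and e3: "a0 + b1 + c1 = 0"
  shows "a0 = a1" "b0 = b1" "c0 = c1"
proof -
  have "(a0 + b0 + c0) + (a1 + b1 + c0) - (a1 + b0 + c1) - (a0 + b1 + c1) = 2 * (c0 - c1)"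
    by (simp add: algebra_simps)
  then have "c0 - c1 = 0" using e0 e1 e2 e3 by simp
  then show "c0 = c1" by simp
  have "(a0 + b0 + c0) - (a1 + b1 + c0) - (a1 + b0 + c1) + (a0 + b1 + c1) = 2 * (a0 - a1)"
    by (simp add: algebra_simps)
  then have "a0 - a1 = 0" using e0 e1 e2 e3 by simp
  then show "a0 = a1" by simp
  have "(a0 + b0 + c0) - (a1 + b1 + c0) + (a1 + b0 + c1) - (a0 + b1 + c1) = 2 * (b0 - b1)"
    by (simp add: algebra_simps)
  then have "b0 - b1 = 0" using e0 e1 e2 e3 by simp
  then show "b0 = b1" by simp
qed

lemma lin4b:
  fixes e xy xz yz :: "'k::field_char_0"
  assumes e1: "e + yz = 0" and e2: "e + xz = 0" and e3: "e + xy = 0" and e4: "xy + xz = 0"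
  shows "e = 0" "xy = 0" "xz = 0" "yz = 0"
proof -
  have "(e + xz) + (e + xy) - (xy + xz) = 2 * e" by (simp add: algebra_simps)
  then have "e = 0" using e2 e3 e4 by simp
  then show "e = 0" "xy = 0" "xz = 0" "yz = 0" using e1 e2 e3 by simp_all
qed


theorem mainTheorem6:
  fixes U V :: "'a set" and E :: "('a \<times> 'a) set"
    and \<eta> \<eta>' :: "'a hatv \<Rightarrow> nat" and n :: nat
    and M :: "'k::field_char_0 mat"
  assumes "bipartite_cubic U V E"
    and "odd (card {F. perfect_matching U V E F})"
    and "n = 10 * card U"
    and "bij_betw \<eta> (Xset U V E) {..<n}"
    and "bij_betw \<eta>' (Yset U V E) {..<n}"
    and "M \<in> carrier_mat n n"
    and "\<forall>x \<in> Xset U V E. \<forall>y \<in> Yset U V E.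
           M $$ (\<eta> x, \<eta>' y) = (if hat_adj E x y then 1 else 0)"
  shows "det M \<noteq> 0"
proof
  assume det0: "det M = 0"
  let ?X = "Xset U V E" and ?Y = "Yset U V E"
  have fU: "finite U" and fV: "finite V" and disj: "U \<inter> V = {}" and EUV: "E \<subseteq> U \<times> V"
    and deg: "\<forall>v\<in>U \<union> V. card (nbr E v) = 3"
    using assms(1) unfolding bipartite_cubic_def by auto
  obtain c where c: "c \<in> carrier_vec n" "c \<noteq> 0\<^sub>v n" "M *\<^sub>v c = 0\<^sub>v n"
    using det_0_iff_vec_prod_zero[OF assms(6)] det0 by auto
  define cf where "cf y = c $ \<eta>' y" for y
  have finY: "finite ?Y" using assms(5) bij_betw_finite by blast
  have row: "(\<Sum>y\<in>?Y. if hat_adj E x y then cf y else 0) = 0" if x: "x \<in> ?X" for x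
  proof -
    have ex: "\<eta> x < n" using assms(4) x by (auto dest: bij_betwE)
    have "0 = (M *\<^sub>v c) $ \<eta> x" using c ex by simp
    also have "\<dots> = (\<Sum>j\<in>{..<n}. M $$ (\<eta> x, j) * c $ j)"
      using ex assms(6) c(1) by (simp add: scalar_prod_def lessThan_atLeast0)
    also have "\<dots> = (\<Sum>y\<in>?Y. M $$ (\<eta> x, \<eta>' y) * c $ (\<eta>' y))"
      using sum.reindex_bij_betw[OF assms(5), of "\<lambda>j. M $$ (\<eta> x, j) * c $ j"] by simp
    also have "\<dots> = (\<Sum>y\<in>?Y. if hat_adj E x y then cf y else 0)"
      using assms(7) x by (auto simp: cf_def intro!: sum.cong)
    finally show ?thesis by simp
  qed
  have nbU: "nbr E u \<subseteq> V" if "u \<in> U" for u using that EUV disj unfolding nbr_def by auto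
  have nbV: "nbr E v \<subseteq> U" if "v \<in> V" for v using that EUV disj unfolding nbr_def by auto
  have three: "\<exists>x y z. nbr E w = {x,y,z} \<and> x \<noteq> y \<and> y \<noteq> z \<and> x \<noteq> z" if "w \<in> U \<union> V" for w
  proof -
    have "card (nbr E w) = 3" using deg that by blast
    then show ?thesis by (rule card_3_iff[THEN iffD1])
  qed
  have finnb: "finite (nbr E w)" if "w \<in> U \<union> V" for w
  proof -
    have "card (nbr E w) = 3" using deg that by blast
    then show ?thesis by (intro card_ge_0_finite) simp
  qed
  define s where "s u w i = cf (Outer u w i)" for u w i
  define t where "t v T = cf (Inner v T)" for v T
  define Ev where "Ev v = {T. T \<subseteq> nbr E v \<and> even (card T)}" for v
  have finEv: "finite (Ev v)" if "v \<in> U \<union> V" for v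
  proof -
    have "Ev v \<subseteq> Pow (nbr E v)" unfolding Ev_def by blast
    moreover have "finite (Pow (nbr E v))" using finnb[OF that] by simp
    ultimately show ?thesis by (rule finite_subset)
  qed
  have R1: "(\<Sum>w\<in>nbr E u. s u w (w \<in> S)) = 0" if u: "u \<in> U" and S: "S \<in> Ev u" for u S
  proof -
    have xX: "Inner u S \<in> ?X" using u S by (simp add: memX Ev_def)
    have "{y\<in>?Y. hat_adj E (Inner u S) y} = (\<lambda>w. Outer u w (w \<in> S)) ` nbr E u"
      using u by (auto simp: adj_Inner memY)
    moreover have "inj_on (\<lambda>w. Outer u w (w \<in> S)) (nbr E u)" by (rule inj_onI) simp
    ultimately have "(\<Sum>y\<in>?Y. if hat_adj E (Inner u S) y then cf y else 0) = (\<Sum>w\<in>nbr E u. s u w (w \<in> S))"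
      by (simp add: sum.inter_filter[OF finY, symmetric] sum.reindex s_def)
    then show ?thesis using row[OF xX] by simp
  qed
  have R2: "s u v i + (\<Sum>T\<in>{T\<in>Ev v. (i \<longleftrightarrow> u \<in> T)}. t v T) = 0" if v: "v \<in> V" and u: "u \<in> nbr E v" for u v i
  proof -
    have xX: "Outer v u i \<in> ?X" using u v by (simp add: memX)
    have uU: "u \<in> U" using nbV v u by auto
    define Ts where "Ts = {T\<in>Ev v. (i \<longleftrightarrow> u \<in> T)}"
    have vu: "v \<in> nbr E u" using u nbr_sym by metis
    have "y \<in> {y\<in>?Y. hat_adj E (Outer v u i) y} \<longleftrightarrow> y \<in> insert (Outer u v i) (Inner v ` Ts)" for y
    proof (cases y)
      case (Inner w T)
      then show ?thesis using v u by (auto simp: adj_Outer memY Ev_def Ts_def)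
    next
      case (Outer w x j)
      then show ?thesis using uU vu u by (auto simp: adj_Outer memY)
    qed
    then have "{y\<in>?Y. hat_adj E (Outer v u i) y} = insert (Outer u v i) (Inner v ` {T\<in>Ev v. (i \<longleftrightarrow> u \<in> T)})"
      unfolding Ts_def by blast
    note setEq = this
    have finTs: "finite Ts" using finEv v unfolding Ts_def by auto
    have "(\<Sum>y\<in>?Y. if hat_adj E (Outer v u i) y then cf y else 0) = sum cf {y\<in>?Y. hat_adj E (Outer v u i) y}"
      by (rule sum.inter_filter[OF finY, symmetric])
    also have "\<dots> = sum cf (insert (Outer u v i) (Inner v ` Ts))"
      unfolding Ts_def using setEq by simp
    also have "\<dots> = cf (Outer u v i) + sum cf (Inner v ` Ts)"
      by (rule sum.insert) (use finTs in auto)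
    also have "sum cf (Inner v ` Ts) = (\<Sum>T\<in>Ts. t v T)"
      unfolding t_def by (rule sum.reindex[unfolded comp_def]) (auto intro: inj_onI)
    finally have "(\<Sum>y\<in>?Y. if hat_adj E (Outer v u i) y then cf y else 0) = s u v i + (\<Sum>T\<in>{T\<in>Ev v. (i \<longleftrightarrow> u \<in> T)}. t v T)"
      unfolding s_def Ts_def .
    then show ?thesis using row[OF xX] by simp
  qed

  have A: "s u w True = s u w False \<and> (\<Sum>w\<in>nbr E u. s u w False) = 0" if u: "u \<in> U" and w: "w \<in> nbr E u" for u w
  proof -
    obtain x y z where N: "nbr E u = {x,y,z}" and d: "x \<noteq> y" "y \<noteq> z" "x \<noteq> z" using three u by blast
    have inEv: "{} \<in> Ev u" "{x,y} \<in> Ev u" "{x,z} \<in> Ev u" "{y,z} \<in> Ev u" using d N by (auto simp: Ev_def)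
    have e0: "s u x False + s u y False + s u z False = 0" using R1[OF u inEv(1)] N d by (simp add: add.assoc)
    have e1: "s u x True + s u y True + s u z False = 0" using R1[OF u inEv(2)] N d by (simp add: add.assoc)
    have e2: "s u x True + s u y False + s u z True = 0" using R1[OF u inEv(3)] N d by (simp add: add.assoc)
    have e3: "s u x False + s u y True + s u z True = 0" using R1[OF u inEv(4)] N d by (simp add: add.assoc)
    note L = lin4[OF e0 e1 e2 e3]
    have "s u w True = s u w False" using w N L by auto
    moreover have "(\<Sum>w\<in>nbr E u. s u w False) = 0" using e0 N d by (simp add: add.assoc)
    ultimately show ?thesis by simp
  qed
  define \<alpha> where "\<alpha> v = (\<Sum>T\<in>Ev v. t v T)" for v
  have B: "\<alpha> v = - (s u v True + s u v False)" if v: "v \<in> V" and u: "u \<in> nbr E v" for u v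
  proof -
    define P where "P i = (\<Sum>T\<in>{T\<in>Ev v. (i \<longleftrightarrow> u \<in> T)}. t v T)" for i
    have fE: "finite (Ev v)" using finEv v by auto
    have eq: "Ev v = {T\<in>Ev v. (True \<longleftrightarrow> u \<in> T)} \<union> {T\<in>Ev v. (False \<longleftrightarrow> u \<in> T)}" by blast
    have "\<alpha> v = sum (t v) ({T\<in>Ev v. (True \<longleftrightarrow> u \<in> T)} \<union> {T\<in>Ev v. (False \<longleftrightarrow> u \<in> T)})"
      unfolding \<alpha>_def using eq by simp
    also have "\<dots> = P True + P False" unfolding P_def
      by (rule sum.union_disjoint) (use fE in auto)
    finally have a: "\<alpha> v = P True + P False" .
    have r1: "P True = - s u v True" using R2[OF v u, of True] unfolding P_def by (simp add: eq_neg_iff_add_eq_0 add.commute)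
    have r2: "P False = - s u v False" using R2[OF v u, of False] unfolding P_def by (simp add: eq_neg_iff_add_eq_0 add.commute)
    show ?thesis using a r1 r2 by simp
  qed
  have sumA: "\<forall>u\<in>U. (\<Sum>w\<in>nbr E u. \<alpha> w) = 0"
  proof
    fix u assume u: "u \<in> U"
    have "(\<Sum>w\<in>nbr E u. \<alpha> w) = (\<Sum>w\<in>nbr E u. - 2 * s u w False)"
    proof (rule sum.cong[OF refl])
      fix w assume w: "w \<in> nbr E u"
      have "w \<in> V" using nbU u w by auto
      moreover have "u \<in> nbr E w" using w nbr_sym by metis
      ultimately have "\<alpha> w = - (s u w True + s u w False)" by (rule B)
      then show "\<alpha> w = - 2 * s u w False" using A[OF u w] by simp
    qed
    also have "\<dots> = - 2 * (\<Sum>w\<in>nbr E u. s u w False)" by (simp add: sum_distrib_left)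
    also have "\<dots> = 0"
    proof -
      obtain x y z where N: "nbr E u = {x,y,z}" using three u by blast
      then have "x \<in> nbr E u" by simp
      then show ?thesis using A[OF u] by simp
    qed
    finally show "(\<Sum>w\<in>nbr E u. \<alpha> w) = 0" .
  qed
  have alpha0: "\<alpha> v = 0" if "v \<in> V" for v using graph_nonsing[OF assms(1) assms(2) sumA that] .
  have s0: "s u w i = 0" if u: "u \<in> U" and w: "w \<in> nbr E u" for u w i
  proof -
    have "w \<in> V" using nbU u w by auto
    moreover have "u \<in> nbr E w" using w nbr_sym by metis
    ultimately have "\<alpha> w = - (s u w True + s u w False)" "\<alpha> w = 0" using B alpha0 by blast+
    then have "- 2 * s u w False = 0" using A[OF u w] by simp
    then have "s u w False = 0" by simp
    then show ?thesis using A[OF u w] by (cases i) auto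
  qed
  have t0: "t v T = 0" if v: "v \<in> V" and T: "T \<in> Ev v" for v T
  proof -
    have P: "(\<Sum>T\<in>{T\<in>Ev v. (i \<longleftrightarrow> u \<in> T)}. t v T) = 0" if u: "u \<in> nbr E v" for u i
    proof -
      have "u \<in> U" using nbV v u by auto
      moreover have "v \<in> nbr E u" using u nbr_sym by metis
      ultimately show ?thesis using R2[OF v u, of i] s0 by simp
    qed
    obtain x y z where N: "nbr E v = {x,y,z}" and d: "x \<noteq> y" "y \<noteq> z" "x \<noteq> z" using three v by blast
    have EvE: "Ev v = {{}, {x,y}, {x,z}, {y,z}}" unfolding Ev_def N using even_subsets3[OF d] .
    have dd: "{x,y} \<noteq> {x,z}" "{x,y} \<noteq> {y,z}" "{x,z} \<noteq> {y,z}" "{x,y} \<noteq> {}" "{x,z} \<noteq> {}" "{y,z} \<noteq> {}"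
      using d by (auto simp: doubleton_eq_iff)
    have Q: "(\<Sum>T\<in>{{}, {x,y}, {x,z}, {y,z}}. (if (i \<longleftrightarrow> u \<in> T) then t v T else 0)) = 0" if u: "u \<in> {x,y,z}" for u i
      using P[of u i] u N EvE by (simp add: sum.inter_filter[symmetric])
    have q1: "t v {} + t v {y,z} = 0" using Q[of x False] d dd by (simp add: insert_commute)
    have q2: "t v {} + t v {x,z} = 0" using Q[of y False] d dd by (simp add: insert_commute)
    have q3: "t v {} + t v {x,y} = 0" using Q[of z False] d dd by (simp add: insert_commute)
    have q4: "t v {x,y} + t v {x,z} = 0" using Q[of x True] d dd by (simp add: insert_commute)
    note L = lin4b[OF q1 q2 q3 q4]
    show ?thesis using T EvE L by auto
  qed
  have "cf y = 0" if y: "y \<in> ?Y" for y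
  proof (cases y)
    case (Inner v T)
    then show ?thesis using y t0 by (auto simp: memY t_def Ev_def)
  next
    case (Outer u w i)
    then show ?thesis using y s0 by (auto simp: memY s_def)
  qed
  then have "c = 0\<^sub>v n"
  proof -
    assume cf0: "\<And>y. y \<in> ?Y \<Longrightarrow> cf y = 0"
    show "c = 0\<^sub>v n"
    proof (rule eq_vecI)
      fix j assume "j < dim_vec (0\<^sub>v n :: 'k vec)"
      then have "j \<in> {..<n}" by simp
      then have "j \<in> \<eta>' ` ?Y" using assms(5) unfolding bij_betw_def by simp
      then obtain y where "y \<in> ?Y" "\<eta>' y = j" by (rule imageE) simp
      then show "c $ j = 0\<^sub>v n $ j" using cf0 \<open>j \<in> {..<n}\<close> unfolding cf_def by auto
    qed (use c(1) in auto)
  qed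
  then show False using c(2) by simp
qed

end
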